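(* Let $R$ be a ring and $M$, $N$ left $R$-modules with $\operatorname{char}(M)=a$ and $\operatorname{char}(N)=b$. (1) If $a$ and $b$ are positive and coprime, then $\operatorname{Ext}^1_R(N,M)=0$. (2) If $M$ is simple and $a=0\neq b$, then $\operatorname{Ext}^1_R(N,M)=0$. (3) If $M$ and $N$ are simple and $a\neq 0=b$, then $\operatorname{Ext}^1_R(N,M)=0$.
   Context: For an $R$-module $M$, the characteristic $\operatorname{char}(M)$ is defined to be the characteristic of the ring $\operatorname{End}_R(M)$. *)

theory Defs
  imports "HOL-Algebra.Algebra"
begin

text \<open>The library locale module requires a commutative ring, so we combine
  ring R, abelian_group M and the library's module axioms.\<close>

definition left_module :: "('r, 'c) ring_scheme \<Rightarrow> ('r, 'm, 'd) module_scheme \<Rightarrow> bool" where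
  "left_module R M \<longleftrightarrow> ring R \<and> abelian_group M \<and> module_axioms R M"

definition module_hom :: "('r, 'c) ring_scheme \<Rightarrow> ('r, 'm, 'd) module_scheme
    \<Rightarrow> ('r, 'n, 'e) module_scheme \<Rightarrow> ('m \<Rightarrow> 'n) set" where
  "module_hom R M N = {f. f \<in> carrier M \<rightarrow>\<^sub>E carrier N \<and>
     (\<forall>x\<in>carrier M. \<forall>y\<in>carrier M. f (x \<oplus>\<^bsub>M\<^esub> y) = f x \<oplus>\<^bsub>N\<^esub> f y) \<and>
     (\<forall>a\<in>carrier R. \<forall>x\<in>carrier M. f (a \<odot>\<^bsub>M\<^esub> x) = a \<odot>\<^bsub>N\<^esub> f x)}"

definition End_ring :: "('r, 'c) ring_scheme \<Rightarrow> ('r, 'm, 'd) module_scheme \<Rightarrow> ('m \<Rightarrow> 'm) ring" where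
  "End_ring R M =
     \<lparr> carrier = module_hom R M M,
       Group.monoid.mult = (\<lambda>f g. compose (carrier M) f g),
       one = (\<lambda>x\<in>carrier M. x),
       Ring.ring.zero = (\<lambda>x\<in>carrier M. \<zero>\<^bsub>M\<^esub>),
       Ring.ring.add = (\<lambda>f g. (\<lambda>x\<in>carrier M. f x \<oplus>\<^bsub>M\<^esub> g x)) \<rparr>"

definition ring_char :: "('a, 'c) ring_scheme \<Rightarrow> nat" where
  "ring_char A =
     (if \<exists>n::nat. n > 0 \<and> [n] \<cdot>\<^bsub>A\<^esub> \<one>\<^bsub>A\<^esub> = \<zero>\<^bsub>A\<^esub>
      then (LEAST n::nat. n > 0 \<and> [n] \<cdot>\<^bsub>A\<^esub> \<one>\<^bsub>A\<^esub> = \<zero>\<^bsub>A\<^esub>)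
      else 0)"

definition module_char :: "('r, 'c) ring_scheme \<Rightarrow> ('r, 'm, 'd) module_scheme \<Rightarrow> nat" where
  "module_char R M = ring_char (End_ring R M)"

definition simple_module :: "('r, 'c) ring_scheme \<Rightarrow> ('r, 'm, 'd) module_scheme \<Rightarrow> bool" where
  "simple_module R M \<longleftrightarrow> left_module R M \<and> carrier M \<noteq> {\<zero>\<^bsub>M\<^esub>} \<and>
     (\<forall>H. submodule H R M \<longrightarrow> H = {\<zero>\<^bsub>M\<^esub>} \<or> H = carrier M)"

definition short_exact ::
  "('r, 'c) ring_scheme \<Rightarrow> ('r, 'm, 'd) module_scheme \<Rightarrow> ('r, 'e, 'f) module_scheme
     \<Rightarrow> ('r, 'n, 'g) module_scheme \<Rightarrow> ('m \<Rightarrow> 'e) \<Rightarrow> ('e \<Rightarrow> 'n) \<Rightarrow> bool" where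
  "short_exact R M E N f g \<longleftrightarrow>
     left_module R M \<and> left_module R E \<and> left_module R N \<and>
     f \<in> module_hom R M E \<and> g \<in> module_hom R E N \<and>
     inj_on f (carrier M) \<and> g ` carrier E = carrier N \<and>
     f ` carrier M = {x \<in> carrier E. g x = \<zero>\<^bsub>N\<^esub>}"

definition ses_splits ::
  "('r, 'c) ring_scheme \<Rightarrow> ('r, 'e, 'f) module_scheme \<Rightarrow> ('r, 'n, 'g) module_scheme
     \<Rightarrow> ('e \<Rightarrow> 'n) \<Rightarrow> bool" where
  "ses_splits R E N g \<longleftrightarrow> (\<exists>s \<in> module_hom R N E. \<forall>y\<in>carrier N. g (s y) = y)"

text \<open>Ext^1_R(N,M) = 0 (Yoneda description): every extension of N by M splits.
  Extensions E range over modules with carrier type 'e; in the theorem 'e is a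
  free (hence universally quantified) type variable.\<close>

definition Ext1_zero ::
  "('r, 'c) ring_scheme \<Rightarrow> ('r, 'n, 'g) module_scheme \<Rightarrow> ('r, 'm, 'd) module_scheme
     \<Rightarrow> 'e itself \<Rightarrow> bool" where
  "Ext1_zero R N M (_ :: 'e itself) \<longleftrightarrow>
     (\<forall>(E :: ('r, 'e) module) f g. short_exact R M E N f g \<longrightarrow> ses_splits R E N g)"

end

theory Submission
  imports Defs
begin

lemma lm_ag: "left_module R M \<Longrightarrow> abelian_group M"
  by (simp add: left_module_def)

lemma lm_smult_closed: "left_module R M \<Longrightarrow> r \<in> carrier R \<Longrightarrow> x \<in> carrier M \<Longrightarrow> r \<odot>\<^bsub>M\<^esub> x \<in> carrier M"
  by (simp add: left_module_def module_axioms_def)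

lemma lm_smult_r_distr: "left_module R M \<Longrightarrow> r \<in> carrier R \<Longrightarrow> x \<in> carrier M \<Longrightarrow> y \<in> carrier M
  \<Longrightarrow> r \<odot>\<^bsub>M\<^esub> (x \<oplus>\<^bsub>M\<^esub> y) = r \<odot>\<^bsub>M\<^esub> x \<oplus>\<^bsub>M\<^esub> r \<odot>\<^bsub>M\<^esub> y"
  by (simp add: left_module_def module_axioms_def)

lemma ag_idem_zero:
  assumes "abelian_group A" "x \<in> carrier A" "x \<oplus>\<^bsub>A\<^esub> x = x"
  shows "x = \<zero>\<^bsub>A\<^esub>"
proof -
  interpret abelian_group A by fact
  show ?thesis using assms(2,3) by (metis add.l_cancel_one' zero_closed)
qed

lemma lm_smult_zero:
  assumes "left_module R M" "r \<in> carrier R"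
  shows "r \<odot>\<^bsub>M\<^esub> \<zero>\<^bsub>M\<^esub> = \<zero>\<^bsub>M\<^esub>"
proof -
  interpret abelian_group M using assms lm_ag by blast
  have "r \<odot>\<^bsub>M\<^esub> \<zero>\<^bsub>M\<^esub> \<oplus>\<^bsub>M\<^esub> r \<odot>\<^bsub>M\<^esub> \<zero>\<^bsub>M\<^esub> = r \<odot>\<^bsub>M\<^esub> \<zero>\<^bsub>M\<^esub>"
    using lm_smult_r_distr[OF assms, of "\<zero>\<^bsub>M\<^esub>" "\<zero>\<^bsub>M\<^esub>"] by simp
  then show ?thesis using ag_idem_zero lm_smult_closed assms by (metis zero_closed abelian_group_axioms)
qed

lemma lm_smult_pow:
  assumes "left_module R M" "r \<in> carrier R" "x \<in> carrier M"
  shows "r \<odot>\<^bsub>M\<^esub> (add_pow M (n::nat) x) = add_pow M n (r \<odot>\<^bsub>M\<^esub> x)"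
proof -
  interpret abelian_group M using assms lm_ag by blast
  show ?thesis
  proof (induction n)
    case 0 then show ?case using lm_smult_zero[OF assms(1,2)] by simp
  next
    case (Suc n)
    have "add_pow M (Suc n) x = add_pow M n x \<oplus>\<^bsub>M\<^esub> x" by (simp add: add_pow_def)
    moreover have "add_pow M (Suc n) (r \<odot>\<^bsub>M\<^esub> x) = add_pow M n (r \<odot>\<^bsub>M\<^esub> x) \<oplus>\<^bsub>M\<^esub> (r \<odot>\<^bsub>M\<^esub> x)" by (simp add: add_pow_def)
    ultimately show ?case using Suc lm_smult_r_distr[OF assms(1,2)] assms(3) by simp
  qed
qed

lemma hom_group_hom:
  assumes "abelian_group A" "abelian_group B" "f \<in> module_hom R A B"
  shows "group_hom (add_monoid A) (add_monoid B) f"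
proof -
  have g1: "group (add_monoid A)" "group (add_monoid B)"
    using assms abelian_group.a_group by blast+
  show ?thesis
    apply (rule group_hom.intro[OF g1])
    apply (rule group_hom_axioms.intro)
    using assms(3) unfolding module_hom_def hom_def by auto
qed

lemma hom_zero:
  assumes "abelian_group A" "abelian_group B" "f \<in> module_hom R A B"
  shows "f \<zero>\<^bsub>A\<^esub> = \<zero>\<^bsub>B\<^esub>"
  using group_hom.hom_one[OF hom_group_hom[OF assms]] by simp

lemma hom_pow:
  assumes "abelian_group A" "abelian_group B" "f \<in> module_hom R A B" "x \<in> carrier A"
  shows "f (add_pow A (n::nat) x) = add_pow B n (f x)"
  using group_hom.hom_nat_pow[OF hom_group_hom[OF assms(1-3)]] assms(4) by (simp add: add_pow_def)

lemma hom_minus: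
  assumes "abelian_group A" "abelian_group B" "f \<in> module_hom R A B" "x \<in> carrier A" "y \<in> carrier A"
  shows "f (x \<ominus>\<^bsub>A\<^esub> y) = f x \<ominus>\<^bsub>B\<^esub> f y"
proof -
  have "f (\<ominus>\<^bsub>A\<^esub> y) = \<ominus>\<^bsub>B\<^esub> f y"
    using group_hom.hom_inv[OF hom_group_hom[OF assms(1-3)]] assms(5) by (simp add: a_inv_def)
  moreover have "f (x \<oplus>\<^bsub>A\<^esub> \<ominus>\<^bsub>A\<^esub> y) = f x \<oplus>\<^bsub>B\<^esub> f (\<ominus>\<^bsub>A\<^esub> y)"
    using assms(3-5) abelian_group.a_inv_closed[OF assms(1)] unfolding module_hom_def by auto
  ultimately show ?thesis by (simp add: a_minus_def)
qed

lemma pow_minus: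
  assumes "abelian_group A" "x \<in> carrier A" "y \<in> carrier A"
  shows "add_pow A (n::nat) (x \<ominus>\<^bsub>A\<^esub> y) = add_pow A n x \<ominus>\<^bsub>A\<^esub> add_pow A n y"
proof -
  interpret abelian_group A by fact
  show ?thesis using assms by (simp add: a_minus_def add.nat_pow_distrib add.nat_pow_inv)
qed


lemma hom_closed: "f \<in> module_hom R A B \<Longrightarrow> x \<in> carrier A \<Longrightarrow> f x \<in> carrier B"
  unfolding module_hom_def by auto
lemma hom_add: "f \<in> module_hom R A B \<Longrightarrow> x \<in> carrier A \<Longrightarrow> y \<in> carrier A \<Longrightarrow> f (x \<oplus>\<^bsub>A\<^esub> y) = f x \<oplus>\<^bsub>B\<^esub> f y"
  unfolding module_hom_def by auto
lemma hom_smult: "f \<in> module_hom R A B \<Longrightarrow> r \<in> carrier R \<Longrightarrow> x \<in> carrier A \<Longrightarrow> f (r \<odot>\<^bsub>A\<^esub> x) = r \<odot>\<^bsub>B\<^esub> f x"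
  unfolding module_hom_def by auto

lemma section_from_unique:
  assumes ses: "short_exact R M E N f g"
    and P_ex: "\<And>y. y \<in> carrier N \<Longrightarrow> \<exists>!e. P y e"
    and P_E: "\<And>y e. y \<in> carrier N \<Longrightarrow> P y e \<Longrightarrow> e \<in> carrier E \<and> g e = y"
    and P_add: "\<And>y1 y2 e1 e2. y1 \<in> carrier N \<Longrightarrow> y2 \<in> carrier N \<Longrightarrow> P y1 e1 \<Longrightarrow> P y2 e2
        \<Longrightarrow> P (y1 \<oplus>\<^bsub>N\<^esub> y2) (e1 \<oplus>\<^bsub>E\<^esub> e2)"
    and P_smult: "\<And>r y e. r \<in> carrier R \<Longrightarrow> y \<in> carrier N \<Longrightarrow> P y e
        \<Longrightarrow> P (r \<odot>\<^bsub>N\<^esub> y) (r \<odot>\<^bsub>E\<^esub> e)"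
  shows "ses_splits R E N g"
proof -
  have lN: "left_module R N" using ses by (simp add: short_exact_def)
  define s where "s = (\<lambda>y\<in>carrier N. THE e. P y e)"
  have sP: "P y (s y)" if "y \<in> carrier N" for y
    using theI'[OF P_ex[OF that]] that by (simp add: s_def)
  have sU: "s y = e" if "y \<in> carrier N" "P y e" for y e
    using the1_equality[OF P_ex[OF that(1)] that(2)] that(1) by (simp add: s_def)
  have addN: "y1 \<oplus>\<^bsub>N\<^esub> y2 \<in> carrier N" if "y1 \<in> carrier N" "y2 \<in> carrier N" for y1 y2
    using lm_ag[OF lN] that abelian_group.axioms(1) abelian_monoid.a_closed by metis
  have smN: "r \<odot>\<^bsub>N\<^esub> y \<in> carrier N" if "r \<in> carrier R" "y \<in> carrier N" for r y
    using lm_smult_closed[OF lN] that by simp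
  have "s \<in> module_hom R N E"
    unfolding module_hom_def
  proof (intro CollectI conjI ballI)
    show "s \<in> carrier N \<rightarrow>\<^sub>E carrier E" using sP P_E by (simp add: s_def PiE_iff)
  next
    fix y1 y2 assume y: "y1 \<in> carrier N" "y2 \<in> carrier N"
    show "s (y1 \<oplus>\<^bsub>N\<^esub> y2) = s y1 \<oplus>\<^bsub>E\<^esub> s y2"
      by (rule sU[OF addN[OF y] P_add[OF y sP[OF y(1)] sP[OF y(2)]]])
  next
    fix r y assume r: "r \<in> carrier R" and y: "y \<in> carrier N"
    show "s (r \<odot>\<^bsub>N\<^esub> y) = r \<odot>\<^bsub>E\<^esub> s y"
      by (rule sU[OF smN[OF r y] P_smult[OF r y sP[OF y]]])
  qed
  moreover have "\<forall>y\<in>carrier N. g (s y) = y" using sP P_E by blast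
  ultimately show ?thesis unfolding ses_splits_def by blast
qed


lemma ag_minus_self: "abelian_group A \<Longrightarrow> x \<in> carrier A \<Longrightarrow> x \<ominus>\<^bsub>A\<^esub> x = \<zero>\<^bsub>A\<^esub>"
  by (simp add: a_minus_def abelian_group.r_neg)
lemma ag_minus_zero: "abelian_group A \<Longrightarrow> x \<in> carrier A \<Longrightarrow> x \<ominus>\<^bsub>A\<^esub> \<zero>\<^bsub>A\<^esub> = x"
proof - assume "abelian_group A" "x \<in> carrier A"
  then interpret abelian_group A by simp
  show ?thesis using \<open>x \<in> carrier A\<close> by (simp add: a_minus_def)
qed
lemma ag_minus_closed: "abelian_group A \<Longrightarrow> x \<in> carrier A \<Longrightarrow> y \<in> carrier A \<Longrightarrow> x \<ominus>\<^bsub>A\<^esub> y \<in> carrier A"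
  by (simp add: abelian_group.minus_closed)
lemma ag_minus_eq0: "abelian_group A \<Longrightarrow> x \<in> carrier A \<Longrightarrow> y \<in> carrier A \<Longrightarrow> x \<ominus>\<^bsub>A\<^esub> y = \<zero>\<^bsub>A\<^esub> \<Longrightarrow> x = y"
proof - assume a: "abelian_group A" "x \<in> carrier A" "y \<in> carrier A" "x \<ominus>\<^bsub>A\<^esub> y = \<zero>\<^bsub>A\<^esub>"
  then interpret abelian_group A by simp
  have "x = x \<ominus>\<^bsub>A\<^esub> y \<oplus>\<^bsub>A\<^esub> y" using a(2,3) by (simp add: a_minus_def a_assoc l_neg)
  then show ?thesis using a by simp
qed


lemma ses_facts:
  assumes "short_exact R M E N f g"
  shows "left_module R M" "left_module R E" "left_module R N"
    "abelian_group M" "abelian_group E" "abelian_group N"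
    "f \<in> module_hom R M E" "g \<in> module_hom R E N"
    "inj_on f (carrier M)" "g ` carrier E = carrier N"
    "f ` carrier M = {x \<in> carrier E. g x = \<zero>\<^bsub>N\<^esub>}"
  using assms lm_ag unfolding short_exact_def by auto

lemma split_B:
  assumes ses: "short_exact R M E N f g"
    and kN: "\<And>y. y \<in> carrier N \<Longrightarrow> add_pow N (b::nat) y = \<zero>\<^bsub>N\<^esub>"
    and surjM: "\<And>m. m \<in> carrier M \<Longrightarrow> \<exists>m'\<in>carrier M. add_pow M b m' = m"
    and injM: "\<And>m. m \<in> carrier M \<Longrightarrow> add_pow M b m = \<zero>\<^bsub>M\<^esub> \<Longrightarrow> m = \<zero>\<^bsub>M\<^esub>"
  shows "ses_splits R E N g"
proof -
  note F = ses_facts[OF ses]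
  interpret E: abelian_group E by (rule F(5))
  interpret M: abelian_group M by (rule F(4))
  interpret N: abelian_group N by (rule F(6))
  define P where "P = (\<lambda>y e. e \<in> carrier E \<and> g e = y \<and> add_pow E b e = \<zero>\<^bsub>E\<^esub>)"
  have fz: "f \<zero>\<^bsub>M\<^esub> = \<zero>\<^bsub>E\<^esub>" by (rule hom_zero[OF F(4,5,7)])
  have gz: "g \<zero>\<^bsub>E\<^esub> = \<zero>\<^bsub>N\<^esub>" by (rule hom_zero[OF F(5,6,8)])
  have gf: "g (f m) = \<zero>\<^bsub>N\<^esub>" if "m \<in> carrier M" for m
  proof - have "f m \<in> f ` carrier M" using that by simp
    then show ?thesis unfolding F(11) by simp qed
  show ?thesis
  proof (rule section_from_unique[OF ses, of P])
    fix y assume y: "y \<in> carrier N"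
    have "y \<in> g ` carrier E" using F(10) y by simp
    then obtain e0 where e0: "e0 \<in> carrier E" "g e0 = y" by (rule imageE) simp
    have "g (add_pow E b e0) = \<zero>\<^bsub>N\<^esub>" using hom_pow[OF F(5,6,8) e0(1)] e0 kN y by simp
    then have "add_pow E b e0 \<in> f ` carrier M" using F(11) e0 by simp
    then obtain m where m: "m \<in> carrier M" "f m = add_pow E b e0" by (rule imageE) simp
    obtain m' where m': "m' \<in> carrier M" "add_pow M b m' = m" using surjM[OF m(1)] by blast
    have fm': "f m' \<in> carrier E" using hom_closed[OF F(7) m'(1)] .
    define e where "e = e0 \<ominus>\<^bsub>E\<^esub> f m'"
    have ge: "g e = y"
    proof -
      have "g e = g e0 \<ominus>\<^bsub>N\<^esub> g (f m')" unfolding e_def by (rule hom_minus[OF F(5,6,8) e0(1) fm'])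
      also have "\<dots> = y \<ominus>\<^bsub>N\<^esub> \<zero>\<^bsub>N\<^esub>" by (simp only: e0(2) gf[OF m'(1)])
      also have "\<dots> = y" by (rule ag_minus_zero[OF F(6) y])
      finally show ?thesis .
    qed
    have be: "add_pow E b e = \<zero>\<^bsub>E\<^esub>"
    proof -
      have "add_pow E b e = add_pow E b e0 \<ominus>\<^bsub>E\<^esub> add_pow E b (f m')"
        unfolding e_def by (rule pow_minus[OF F(5) e0(1) fm'])
      also have "add_pow E b (f m') = f (add_pow M b m')" by (rule hom_pow[OF F(4,5,7) m'(1), symmetric])
      also have "\<dots> = add_pow E b e0" by (simp only: m'(2) m(2))
      also have "add_pow E b e0 \<ominus>\<^bsub>E\<^esub> add_pow E b e0 = \<zero>\<^bsub>E\<^esub>"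
        by (rule ag_minus_self[OF F(5) E.add.nat_pow_closed[OF e0(1)]])
      finally show ?thesis .
    qed
    have "P y e" unfolding P_def using ge be e0 fm' by (simp add: e_def)
    moreover have "e1 = e2" if "P y e1" "P y e2" for e1 e2
    proof -
      have e: "e1 \<in> carrier E" "e2 \<in> carrier E" "g e1 = y" "g e2 = y"
        "add_pow E b e1 = \<zero>\<^bsub>E\<^esub>" "add_pow E b e2 = \<zero>\<^bsub>E\<^esub>" using that by (auto simp: P_def)
      define d where "d = e1 \<ominus>\<^bsub>E\<^esub> e2"
      have d: "d \<in> carrier E" using e by (simp add: d_def)
      have "g d = \<zero>\<^bsub>N\<^esub>" using hom_minus[OF F(5,6,8) e(1,2)] e ag_minus_self[OF F(6)] y
        by (simp add: d_def)
      then obtain m where m: "m \<in> carrier M" "f m = d" using F(11) d by (metis (mono_tags, lifting) imageE mem_Collect_eq)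
      have "f (add_pow M b m) = \<zero>\<^bsub>E\<^esub>"
        using hom_pow[OF F(4,5,7) m(1), of b] m pow_minus[OF F(5) e(1,2), of b] e
          ag_minus_self[OF F(5)] by (simp add: d_def)
      then have "add_pow M b m = \<zero>\<^bsub>M\<^esub>" using F(9) fz m(1)
        by (metis M.add.nat_pow_closed M.zero_closed inj_onD)
      then have "m = \<zero>\<^bsub>M\<^esub>" using injM m(1) by blast
      then have "d = \<zero>\<^bsub>E\<^esub>" using m fz by simp
      then show ?thesis using ag_minus_eq0[OF F(5) e(1,2)] by (simp add: d_def)
    qed
    ultimately show "\<exists>!e. P y e" by blast
  next
    fix y e assume "P y e" then show "e \<in> carrier E \<and> g e = y" by (simp add: P_def)
  next
    fix y1 y2 e1 e2 assume y: "y1 \<in> carrier N" "y2 \<in> carrier N" and p: "P y1 e1" "P y2 e2"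
    have e: "e1 \<in> carrier E" "e2 \<in> carrier E" "g e1 = y1" "g e2 = y2"
        "add_pow E b e1 = \<zero>\<^bsub>E\<^esub>" "add_pow E b e2 = \<zero>\<^bsub>E\<^esub>" using p by (auto simp: P_def)
    have "add_pow E b (e1 \<oplus>\<^bsub>E\<^esub> e2) = \<zero>\<^bsub>E\<^esub>"
      using E.add.nat_pow_distrib[OF e(1,2), of b] e(5,6) by simp
    then show "P (y1 \<oplus>\<^bsub>N\<^esub> y2) (e1 \<oplus>\<^bsub>E\<^esub> e2)"
      using hom_add[OF F(8) e(1,2)] e unfolding P_def by simp
  next
    fix r y e assume r: "r \<in> carrier R" and y: "y \<in> carrier N" and p: "P y e"
    have e: "e \<in> carrier E" "g e = y" "add_pow E b e = \<zero>\<^bsub>E\<^esub>" using p by (auto simp: P_def)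
    have "add_pow E b (r \<odot>\<^bsub>E\<^esub> e) = \<zero>\<^bsub>E\<^esub>"
      using lm_smult_pow[OF F(2) r e(1), of b] lm_smult_zero[OF F(2) r] e(3) by simp
    then show "P (r \<odot>\<^bsub>N\<^esub> y) (r \<odot>\<^bsub>E\<^esub> e)"
      using hom_smult[OF F(8) r e(1)] lm_smult_closed[OF F(2) r e(1)] e unfolding P_def by simp
  qed
qed


lemma split_A:
  assumes ses: "short_exact R M E N f g"
    and kM: "\<And>m. m \<in> carrier M \<Longrightarrow> add_pow M (a::nat) m = \<zero>\<^bsub>M\<^esub>"
    and surjN: "\<And>y. y \<in> carrier N \<Longrightarrow> \<exists>y'\<in>carrier N. add_pow N a y' = y"
    and injN: "\<And>y. y \<in> carrier N \<Longrightarrow> add_pow N a y = \<zero>\<^bsub>N\<^esub> \<Longrightarrow> y = \<zero>\<^bsub>N\<^esub>"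
  shows "ses_splits R E N g"
proof -
  note F = ses_facts[OF ses]
  interpret E: abelian_group E by (rule F(5))
  interpret M: abelian_group M by (rule F(4))
  interpret N: abelian_group N by (rule F(6))
  define P where "P = (\<lambda>y e. e \<in> carrier E \<and> g e = y \<and> (\<exists>x\<in>carrier E. e = add_pow E a x))"
  have fz: "f \<zero>\<^bsub>M\<^esub> = \<zero>\<^bsub>E\<^esub>" by (rule hom_zero[OF F(4,5,7)])
  show ?thesis
  proof (rule section_from_unique[OF ses, of P])
    fix y assume y: "y \<in> carrier N"
    obtain y' where y': "y' \<in> carrier N" "add_pow N a y' = y" using surjN[OF y] by blast
    have "y' \<in> g ` carrier E" using F(10) y' by simp
    then obtain x where x: "x \<in> carrier E" "g x = y'" by (rule imageE) simp
    have "g (add_pow E a x) = y" using hom_pow[OF F(5,6,8) x(1), of a] x(2) y'(2) by simp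
    then have "P y (add_pow E a x)" unfolding P_def using x(1) E.add.nat_pow_closed[OF x(1)] by blast
    moreover have "e1 = e2" if pp: "P y e1" "P y e2" for e1 e2
    proof -
      obtain x1 x2 where e: "x1 \<in> carrier E" "x2 \<in> carrier E" "g e1 = y" "g e2 = y"
        "e1 = add_pow E a x1" "e2 = add_pow E a x2" using pp unfolding P_def by metis
      define d where "d = x1 \<ominus>\<^bsub>E\<^esub> x2"
      have d: "d \<in> carrier E" using e by (simp add: d_def)
      have gd: "g d \<in> carrier N" using hom_closed[OF F(8) d] .
      have ad: "add_pow E a d = e1 \<ominus>\<^bsub>E\<^esub> e2" unfolding d_def e(5,6) by (rule pow_minus[OF F(5) e(1,2)])
      have "add_pow N a (g d) = g (add_pow E a d)" by (rule hom_pow[OF F(5,6,8) d, symmetric])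
      also have "\<dots> = g e1 \<ominus>\<^bsub>N\<^esub> g e2" unfolding ad
        by (rule hom_minus[OF F(5,6,8)]) (simp_all add: e)
      also have "\<dots> = \<zero>\<^bsub>N\<^esub>" unfolding e(3,4) by (rule ag_minus_self[OF F(6) y])
      finally have "g d = \<zero>\<^bsub>N\<^esub>" using injN[OF gd] by simp
      then have "d \<in> f ` carrier M" unfolding F(11) using d by simp
      then obtain m where m: "m \<in> carrier M" "f m = d" by (rule imageE) simp
      have "add_pow E a d = f (add_pow M a m)" using hom_pow[OF F(4,5,7) m(1), of a] m(2) by simp
      also have "\<dots> = \<zero>\<^bsub>E\<^esub>" using kM[OF m(1)] fz by simp
      finally have "e1 \<ominus>\<^bsub>E\<^esub> e2 = \<zero>\<^bsub>E\<^esub>" using ad by simp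
      then show ?thesis using ag_minus_eq0[OF F(5)] e by simp
    qed
    ultimately show "\<exists>!e. P y e" by blast
  next
    fix y e assume "P y e" then show "e \<in> carrier E \<and> g e = y" by (simp add: P_def)
  next
    fix y1 y2 e1 e2 assume y: "y1 \<in> carrier N" "y2 \<in> carrier N" and p: "P y1 e1" "P y2 e2"
    obtain x1 x2 where e: "x1 \<in> carrier E" "x2 \<in> carrier E" "g e1 = y1" "g e2 = y2"
        "e1 = add_pow E a x1" "e2 = add_pow E a x2" using p unfolding P_def by metis
    have s: "e1 \<oplus>\<^bsub>E\<^esub> e2 = add_pow E a (x1 \<oplus>\<^bsub>E\<^esub> x2)"
      using E.add.nat_pow_distrib[OF e(1,2), of a] e(5,6) by simp
    have "g (e1 \<oplus>\<^bsub>E\<^esub> e2) = y1 \<oplus>\<^bsub>N\<^esub> y2" using hom_add[OF F(8)] e by simp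
    then show "P (y1 \<oplus>\<^bsub>N\<^esub> y2) (e1 \<oplus>\<^bsub>E\<^esub> e2)"
      unfolding P_def using s e E.add.nat_pow_closed E.a_closed by metis
  next
    fix r y e assume r: "r \<in> carrier R" and y: "y \<in> carrier N" and p: "P y e"
    obtain x where e: "x \<in> carrier E" "g e = y" "e = add_pow E a x" using p unfolding P_def by metis
    have s: "r \<odot>\<^bsub>E\<^esub> e = add_pow E a (r \<odot>\<^bsub>E\<^esub> x)"
      using lm_smult_pow[OF F(2) r e(1), of a] e(3) by simp
    have "g (r \<odot>\<^bsub>E\<^esub> e) = r \<odot>\<^bsub>N\<^esub> y" using hom_smult[OF F(8) r] e by simp
    then show "P (r \<odot>\<^bsub>N\<^esub> y) (r \<odot>\<^bsub>E\<^esub> e)"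
      unfolding P_def using s e lm_smult_closed[OF F(2) r e(1)] E.add.nat_pow_closed by metis
  qed
qed


lemma End_pow:
  "add_pow (End_ring R M) (n::nat) (\<one>\<^bsub>End_ring R M\<^esub>) = (\<lambda>x\<in>carrier M. add_pow M n x)"
proof (induction n)
  case 0 then show ?case by (simp add: add_pow_def End_ring_def)
next
  case (Suc n)
  have "add_pow (End_ring R M) (Suc n) (\<one>\<^bsub>End_ring R M\<^esub>) =
    add_pow (End_ring R M) n (\<one>\<^bsub>End_ring R M\<^esub>) \<oplus>\<^bsub>End_ring R M\<^esub> \<one>\<^bsub>End_ring R M\<^esub>"
    by (simp add: add_pow_def)
  also have "\<dots> = (\<lambda>x\<in>carrier M. add_pow M n x \<oplus>\<^bsub>M\<^esub> x)"
    unfolding Suc by (simp add: End_ring_def, rule restrict_ext, simp)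
  also have "\<dots> = (\<lambda>x\<in>carrier M. add_pow M (Suc n) x)"
    by (simp add: add_pow_def)
  finally show ?case .
qed

lemma End_zero: "\<zero>\<^bsub>End_ring R M\<^esub> = (\<lambda>x\<in>carrier M. \<zero>\<^bsub>M\<^esub>)"
  by (simp add: End_ring_def)

lemma char_Q: "(add_pow (End_ring R M) (n::nat) (\<one>\<^bsub>End_ring R M\<^esub>) = \<zero>\<^bsub>End_ring R M\<^esub>)
   \<longleftrightarrow> (\<forall>x\<in>carrier M. add_pow M n x = \<zero>\<^bsub>M\<^esub>)"
  unfolding End_pow End_zero
proof
  assume h: "(\<lambda>x\<in>carrier M. add_pow M n x) = (\<lambda>x\<in>carrier M. \<zero>\<^bsub>M\<^esub>)"
  show "\<forall>x\<in>carrier M. add_pow M n x = \<zero>\<^bsub>M\<^esub>"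
  proof
    fix x assume x: "x \<in> carrier M"
    have "(\<lambda>x\<in>carrier M. add_pow M n x) x = (\<lambda>x\<in>carrier M. \<zero>\<^bsub>M\<^esub>) x" using h by (rule fun_cong)
    then show "add_pow M n x = \<zero>\<^bsub>M\<^esub>" using x by simp
  qed
next
  assume "\<forall>x\<in>carrier M. add_pow M n x = \<zero>\<^bsub>M\<^esub>"
  then show "(\<lambda>x\<in>carrier M. add_pow M n x) = (\<lambda>x\<in>carrier M. \<zero>\<^bsub>M\<^esub>)"
    by (intro restrict_ext) simp
qed

lemma char_pos:
  assumes "module_char R M > 0" "x \<in> carrier M"
  shows "add_pow M (module_char R M) x = \<zero>\<^bsub>M\<^esub>"
proof -
  let ?A = "End_ring R M"
  let ?Q = "\<lambda>n::nat. n > 0 \<and> add_pow ?A n (\<one>\<^bsub>?A\<^esub>) = \<zero>\<^bsub>?A\<^esub>"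
  have ex: "\<exists>n. ?Q n"
  proof (rule ccontr)
    assume "\<not> (\<exists>n. ?Q n)"
    then have "module_char R M = 0" unfolding module_char_def ring_char_def by (rule if_not_P)
    then show False using assms by simp
  qed
  then have "module_char R M = (LEAST n. ?Q n)" unfolding module_char_def ring_char_def by (rule if_P)
  moreover have "?Q (LEAST n. ?Q n)" by (rule LeastI_ex[OF ex])
  ultimately have "?Q (module_char R M)" by simp
  then have "\<forall>x\<in>carrier M. add_pow M (module_char R M) x = \<zero>\<^bsub>M\<^esub>" using char_Q by metis
  then show ?thesis using assms(2) by simp
qed

lemma char_zero:
  assumes "module_char R M = 0" "(n::nat) > 0"
  shows "\<exists>x\<in>carrier M. add_pow M n x \<noteq> \<zero>\<^bsub>M\<^esub>"
proof -
  let ?A = "End_ring R M"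
  let ?Q = "\<lambda>n::nat. n > 0 \<and> add_pow ?A n (\<one>\<^bsub>?A\<^esub>) = \<zero>\<^bsub>?A\<^esub>"
  have "\<not> (\<exists>n. ?Q n)"
  proof
    assume ex: "\<exists>n. ?Q n"
    then have "module_char R M = (LEAST n. ?Q n)" unfolding module_char_def ring_char_def by (rule if_P)
    moreover have "?Q (LEAST n. ?Q n)" by (rule LeastI_ex[OF ex])
    ultimately show False using assms(1) by simp
  qed
  then have "add_pow ?A n (\<one>\<^bsub>?A\<^esub>) \<noteq> \<zero>\<^bsub>?A\<^esub>" using assms(2) by meson
  then have "\<not> (\<forall>x\<in>carrier M. add_pow M n x = \<zero>\<^bsub>M\<^esub>)" using char_Q by metis
  then show ?thesis by simp
qed

lemma my_submoduleI:
  assumes "H \<subseteq> carrier M" "\<zero>\<^bsub>M\<^esub> \<in> H"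
    "\<And>a. a \<in> H \<Longrightarrow> \<ominus>\<^bsub>M\<^esub> a \<in> H"
    "\<And>a b. a \<in> H \<Longrightarrow> b \<in> H \<Longrightarrow> a \<oplus>\<^bsub>M\<^esub> b \<in> H"
    "\<And>r x. r \<in> carrier R \<Longrightarrow> x \<in> H \<Longrightarrow> r \<odot>\<^bsub>M\<^esub> x \<in> H"
  shows "submodule H R M"
  apply (intro submodule.intro subgroup.intro)
  using assms unfolding submodule_axioms_def
  by (simp_all add: a_inv_def)

lemma simple_bij:
  assumes S: "simple_module R M" and c: "module_char R M = 0" and n: "(n::nat) > 0"
  shows "\<And>m. m \<in> carrier M \<Longrightarrow> \<exists>m'\<in>carrier M. add_pow M n m' = m"
    and "\<And>m. m \<in> carrier M \<Longrightarrow> add_pow M n m = \<zero>\<^bsub>M\<^esub> \<Longrightarrow> m = \<zero>\<^bsub>M\<^esub>"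
proof -
  have lM: "left_module R M" and sub: "\<And>H. submodule H R M \<Longrightarrow> H = {\<zero>\<^bsub>M\<^esub>} \<or> H = carrier M"
    using S unfolding simple_module_def by auto
  interpret M: abelian_group M using lm_ag[OF lM] .
  obtain x0 where x0: "x0 \<in> carrier M" "add_pow M n x0 \<noteq> \<zero>\<^bsub>M\<^esub>" using char_zero[OF c n] by blast
  define H where "H = (\<lambda>x. add_pow M n x) ` carrier M"
  have "submodule H R M"
  proof (rule my_submoduleI)
    show "H \<subseteq> carrier M" unfolding H_def by auto
    show "\<zero>\<^bsub>M\<^esub> \<in> H" unfolding H_def using M.add.nat_pow_one[of n] by (metis M.zero_closed image_eqI)
    show "\<ominus>\<^bsub>M\<^esub> a \<in> H" if h: "a \<in> H" for a
    proof -
      obtain x where x: "x \<in> carrier M" "a = add_pow M n x" using h unfolding H_def by (rule imageE) simp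
      have "\<ominus>\<^bsub>M\<^esub> a = add_pow M n (\<ominus>\<^bsub>M\<^esub> x)" using M.add.nat_pow_inv[OF x(1), of n] x(2) by simp
      then show ?thesis unfolding H_def using x(1) by (metis M.a_inv_closed image_eqI)
    qed
    show "a \<oplus>\<^bsub>M\<^esub> b \<in> H" if h: "a \<in> H" "b \<in> H" for a b
    proof -
      obtain x where x: "x \<in> carrier M" "a = add_pow M n x" using h(1) unfolding H_def by (rule imageE) simp
      obtain y where y: "y \<in> carrier M" "b = add_pow M n y" using h(2) unfolding H_def by (rule imageE) simp
      have "a \<oplus>\<^bsub>M\<^esub> b = add_pow M n (x \<oplus>\<^bsub>M\<^esub> y)" using M.add.nat_pow_distrib[OF x(1) y(1), of n] x(2) y(2) by simp
      then show ?thesis unfolding H_def using x(1) y(1) by (metis M.a_closed image_eqI)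
    qed
    show "r \<odot>\<^bsub>M\<^esub> a \<in> H" if h: "r \<in> carrier R" "a \<in> H" for r a
    proof -
      obtain x where x: "x \<in> carrier M" "a = add_pow M n x" using h(2) unfolding H_def by (rule imageE) simp
      have "r \<odot>\<^bsub>M\<^esub> a = add_pow M n (r \<odot>\<^bsub>M\<^esub> x)" using lm_smult_pow[OF lM h(1) x(1), of n] x(2) by simp
      then show ?thesis unfolding H_def using lm_smult_closed[OF lM h(1) x(1)] by (metis image_eqI)
    qed
  qed
  moreover have "H \<noteq> {\<zero>\<^bsub>M\<^esub>}"
  proof
    assume "H = {\<zero>\<^bsub>M\<^esub>}"
    moreover have "add_pow M n x0 \<in> H" unfolding H_def using x0(1) by simp
    ultimately show False using x0(2) by simp
  qed
  ultimately have "H = carrier M" using sub by metis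
  then show "\<exists>m'\<in>carrier M. add_pow M n m' = m" if m: "m \<in> carrier M" for m
  proof -
    have "m \<in> H" using m \<open>H = carrier M\<close> by simp
    then obtain m' where "m' \<in> carrier M" "m = add_pow M n m'" unfolding H_def by (rule imageE) simp
    then show ?thesis by (intro bexI[of _ m']) simp_all
  qed
  define K where "K = {x \<in> carrier M. add_pow M n x = \<zero>\<^bsub>M\<^esub>}"
  have "submodule K R M"
  proof (rule my_submoduleI)
    show "K \<subseteq> carrier M" unfolding K_def by auto
    show "\<zero>\<^bsub>M\<^esub> \<in> K" unfolding K_def by simp
    show "\<ominus>\<^bsub>M\<^esub> a \<in> K" if "a \<in> K" for a
      using that unfolding K_def by (simp add: M.add.nat_pow_inv)
    show "a \<oplus>\<^bsub>M\<^esub> b \<in> K" if "a \<in> K" "b \<in> K" for a b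
      using that unfolding K_def by (simp add: M.add.nat_pow_distrib)
    show "r \<odot>\<^bsub>M\<^esub> x \<in> K" if "r \<in> carrier R" "x \<in> K" for r x
    proof -
      have x: "x \<in> carrier M" "add_pow M n x = \<zero>\<^bsub>M\<^esub>" using that(2) unfolding K_def by auto
      have "add_pow M n (r \<odot>\<^bsub>M\<^esub> x) = \<zero>\<^bsub>M\<^esub>"
        using lm_smult_pow[OF lM that(1) x(1), of n] x(2) lm_smult_zero[OF lM that(1)] by simp
      then show ?thesis unfolding K_def using lm_smult_closed[OF lM that(1) x(1)] by simp
    qed
  qed
  moreover have "K \<noteq> carrier M" using x0 unfolding K_def by auto
  ultimately have "K = {\<zero>\<^bsub>M\<^esub>}" using sub by metis
  then show "m = \<zero>\<^bsub>M\<^esub>" if m: "m \<in> carrier M" "add_pow M n m = \<zero>\<^bsub>M\<^esub>" for m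
  proof -
    have "m \<in> K" unfolding K_def using m by simp
    then show ?thesis using \<open>K = {\<zero>\<^bsub>M\<^esub>}\<close> by simp
  qed
qed

lemma bezout_bij:
  assumes A: "abelian_group A" and kb: "\<And>y. y \<in> carrier A \<Longrightarrow> add_pow A (b::nat) y = \<zero>\<^bsub>A\<^esub>"
    and bz: "(a::nat) * x = b * z + 1"
  shows "\<And>y. y \<in> carrier A \<Longrightarrow> \<exists>y'\<in>carrier A. add_pow A a y' = y"
    and "\<And>y. y \<in> carrier A \<Longrightarrow> add_pow A a y = \<zero>\<^bsub>A\<^esub> \<Longrightarrow> y = \<zero>\<^bsub>A\<^esub>"
proof -
  interpret abelian_group A by fact
  have key: "add_pow A a (add_pow A x y) = y" "add_pow A x (add_pow A a y) = y" if y: "y \<in> carrier A" for y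
  proof -
    have "add_pow A (a * x) y = add_pow A (b * z) y \<oplus>\<^bsub>A\<^esub> add_pow A (1::nat) y"
      unfolding bz by (rule add.nat_pow_mult[OF y, symmetric])
    also have "add_pow A (b * z) y = \<zero>\<^bsub>A\<^esub>"
      using add.nat_pow_pow[OF y, of z b] kb[OF y] by simp
    finally have "add_pow A (a * x) y = y" using y by simp
    then show "add_pow A a (add_pow A x y) = y" "add_pow A x (add_pow A a y) = y"
      using add.nat_pow_pow[OF y] by (simp_all add: mult.commute)
  qed
  show "\<exists>y'\<in>carrier A. add_pow A a y' = y" if y: "y \<in> carrier A" for y
    using key(1)[OF y] add.nat_pow_closed[OF y, of x] by (intro bexI[of _ "add_pow A x y"])
  show "y = \<zero>\<^bsub>A\<^esub>" if y: "y \<in> carrier A" "add_pow A a y = \<zero>\<^bsub>A\<^esub>" for y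
  proof -
    have "y = add_pow A x (add_pow A a y)" using key(2)[OF y(1)] by simp
    also have "\<dots> = \<zero>\<^bsub>A\<^esub>" unfolding y(2) by (rule add.nat_pow_one)
    finally show ?thesis .
  qed
qed


theorem mainTheorem4:
  fixes R :: "('r, 'c) ring_scheme"
    and M :: "('r, 'm) module" and N :: "('r, 'n) module"
  assumes "ring R" and "left_module R M" and "left_module R N"
  shows "(module_char R M > 0 \<and> module_char R N > 0 \<and>
            coprime (module_char R M) (module_char R N)
            \<longrightarrow> Ext1_zero R N M TYPE('e))
       \<and> (simple_module R M \<and> module_char R M = 0 \<and> module_char R N \<noteq> 0
            \<longrightarrow> Ext1_zero R N M TYPE('e))
       \<and> (simple_module R M \<and> simple_module R N \<and>
            module_char R M \<noteq> 0 \<and> module_char R N = 0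
            \<longrightarrow> Ext1_zero R N M TYPE('e))"
proof (intro conjI impI)
  assume h: "module_char R M > 0 \<and> module_char R N > 0 \<and>
            coprime (module_char R M) (module_char R N)"
  let ?a = "module_char R M" and ?b = "module_char R N"
  have kM: "\<And>m. m \<in> carrier M \<Longrightarrow> add_pow M ?a m = \<zero>\<^bsub>M\<^esub>" using h by (intro char_pos) simp_all
  have kN: "\<And>y. y \<in> carrier N \<Longrightarrow> add_pow N ?b y = \<zero>\<^bsub>N\<^esub>" using h by (intro char_pos) simp_all
  obtain x z where "?a * x = ?b * z + gcd ?a ?b" using bezout_nat[of ?a ?b] h by auto
  then have bz: "?a * x = ?b * z + 1" using h by (simp add: coprime_iff_gcd_eq_1)
  note bj = bezout_bij[OF lm_ag[OF assms(3)] kN bz]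
  show "Ext1_zero R N M TYPE('e)" unfolding Ext1_zero_def
  proof (intro allI impI)
    fix E :: "('r, 'e) module" and f g assume ses: "short_exact R M E N f g"
    show "ses_splits R E N g" by (rule split_A[OF ses kM bj])
  qed
next
  assume h: "simple_module R M \<and> module_char R M = 0 \<and> module_char R N \<noteq> 0"
  let ?b = "module_char R N"
  have kN: "\<And>y. y \<in> carrier N \<Longrightarrow> add_pow N ?b y = \<zero>\<^bsub>N\<^esub>" using h by (intro char_pos) simp_all
  have bp: "?b > 0" using h by simp
  note bj = simple_bij[of R M, OF _ _ bp] 
  show "Ext1_zero R N M TYPE('e)" unfolding Ext1_zero_def
  proof (intro allI impI)
    fix E :: "('r, 'e) module" and f g assume ses: "short_exact R M E N f g"
    show "ses_splits R E N g" using h by (intro split_B[OF ses kN bj]) simp_all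
  qed
next
  assume h: "simple_module R M \<and> simple_module R N \<and>
            module_char R M \<noteq> 0 \<and> module_char R N = 0"
  let ?a = "module_char R M"
  have kM: "\<And>m. m \<in> carrier M \<Longrightarrow> add_pow M ?a m = \<zero>\<^bsub>M\<^esub>" using h by (intro char_pos) simp_all
  have ap: "?a > 0" using h by simp
  note bj = simple_bij[of R N, OF _ _ ap]
  show "Ext1_zero R N M TYPE('e)" unfolding Ext1_zero_def
  proof (intro allI impI)
    fix E :: "('r, 'e) module" and f g assume ses: "short_exact R M E N f g"
    show "ses_splits R E N g" using h by (intro split_A[OF ses kM bj]) simp_all
  qed
qed

end
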